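(* Fix $\vartheta>0$ and let $D_n^{(\vartheta)}$ be the depth of the $n$-th inserted node in a Hoppe tree with parameter $\vartheta$. Then for all $n\geq 2$ $$D_n^{(\vartheta)}\stackrel{d}{=} 1 + \sum_{i=1}^{n-2} B_{i},$$ where $B_1,\ldots,B_{n-2}$ are independent random variables with $\mathbb{P}(B_i=1)=1-\mathbb{P}(B_i=0)= \frac{1}{\vartheta+i}$ for $i=1,\ldots,n-2$.
   Context: Hoppe tree with parameter $\vartheta>0$: the tree is grown by successive insertion of nodes, labelled $1,2,3,\ldots$ in order of insertion. Initially there is only the root (node $1$). In each step a parent node is chosen among the existing nodes, independently of the past, with probability proportional to its weight, where the root has weight $\vartheta$ and every other node has weight $1$; a new node is attached as a child of the chosen node. The Hoppe tree with $n$ nodes is the tree after $n-1$ insertions. The depth of a node is its distance (number of edges) to the root. *)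

theory Defs
  imports "HOL-Probability.Probability"
begin

text \<open>A (recursive) tree with nodes 1..m is encoded by a list par of length m-1:
  par ! (k-2) is the parent of node k, for k = 2..m.  Node 1 is the root.\<close>

definition parent_choice :: "real \<Rightarrow> nat \<Rightarrow> nat pmf" where
  "parent_choice \<theta> m = embed_pmf (\<lambda>j.
     if j = 1 then \<theta> / (\<theta> + real m - 1)
     else if 2 \<le> j \<and> j \<le> m then 1 / (\<theta> + real m - 1) else 0)"

fun hoppe_tree :: "real \<Rightarrow> nat \<Rightarrow> nat list pmf" where
  "hoppe_tree \<theta> 0 = return_pmf []"
| "hoppe_tree \<theta> (Suc 0) = return_pmf []"
| "hoppe_tree \<theta> (Suc (Suc k)) =
     bind_pmf (hoppe_tree \<theta> (Suc k))
       (\<lambda>par. map_pmf (\<lambda>j. par @ [j]) (parent_choice \<theta> (Suc k)))"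

text \<open>Depth of node k: follow parents until the root; fuel bounds the number of steps
  (parents have smaller labels, so fuel k suffices).\<close>
fun depth_aux :: "nat list \<Rightarrow> nat \<Rightarrow> nat \<Rightarrow> nat" where
  "depth_aux par 0 k = 0"
| "depth_aux par (Suc f) k = (if k \<le> 1 then 0 else Suc (depth_aux par f (par ! (k - 2))))"

definition depth :: "nat list \<Rightarrow> nat \<Rightarrow> nat" where
  "depth par k = depth_aux par k k"

end

theory Submission
  imports Defs
begin

definition pcw :: "real \<Rightarrow> nat \<Rightarrow> nat \<Rightarrow> real" where
  "pcw \<theta> m j = (if j = 1 then \<theta> / (\<theta> + real m - 1)
     else if 2 \<le> j \<and> j \<le> m then 1 / (\<theta> + real m - 1) else 0)"

lemma pcw_integral:
  assumes "\<theta> > 0" "m \<ge> 1"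
  shows "(\<integral>\<^sup>+x. ennreal (pcw \<theta> m x) \<partial>count_space UNIV) = 1"
proof -
  have pos: "\<theta> + real m - 1 > 0" using assms by simp
  have "(\<integral>\<^sup>+x. ennreal (pcw \<theta> m x) \<partial>count_space UNIV) = (\<Sum>x\<in>{1..m}. ennreal (pcw \<theta> m x))"
    using assms by (intro nn_integral_count_space') (auto simp: pcw_def)
  also have "\<dots> = ennreal (\<Sum>x\<in>{1..m}. pcw \<theta> m x)"
    using assms pos by (intro sum_ennreal) (auto simp: pcw_def)
  also have "{1..m} = insert 1 {2..m}" using assms by auto
  also have "(\<Sum>x\<in>insert 1 {2..m}. pcw \<theta> m x) = \<theta> / (\<theta> + real m - 1) + (\<Sum>x\<in>{2..m}. 1 / (\<theta> + real m - 1))"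
    by (subst sum.insert) (auto simp: pcw_def intro!: sum.cong)
  also have "\<dots> = (\<theta> + (real m - 1)) / (\<theta> + real m - 1)"
    using assms by (simp add: of_nat_diff add_divide_distrib)
  also have "\<dots> = 1" using pos by simp
  finally show ?thesis by simp
qed

lemma pc_eq: "parent_choice \<theta> m = embed_pmf (pcw \<theta> m)"
  unfolding parent_choice_def pcw_def ..

lemma pmf_pc:
  assumes "\<theta> > 0" "m \<ge> 1"
  shows "pmf (parent_choice \<theta> m) j = pcw \<theta> m j"
  unfolding pc_eq using assms
  by (intro pmf_embed_pmf pcw_integral) (auto simp: pcw_def)

lemma set_pc:
  assumes "\<theta> > 0" "m \<ge> 1" "j \<in> set_pmf (parent_choice \<theta> m)"
  shows "1 \<le> j \<and> j \<le> m"
  using assms by (auto simp: set_pmf_iff pmf_pc pcw_def split: if_splits)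

lemma pc_mix:
  assumes "\<theta> > 0" "m \<ge> 1"
  shows "parent_choice \<theta> (Suc m) = bind_pmf (bernoulli_pmf (1 / (\<theta> + real m)))
          (\<lambda>b. if b then return_pmf (Suc m) else parent_choice \<theta> m)"
proof (rule pmf_eqI)
  fix j
  have pos: "\<theta> + real m - 1 > 0" "\<theta> + real m > 1" using assms by auto
  have p1: "0 \<le> 1 / (\<theta> + real m)" "1 / (\<theta> + real m) \<le> 1" using pos by auto
  show "pmf (parent_choice \<theta> (Suc m)) j = pmf (bind_pmf (bernoulli_pmf (1 / (\<theta> + real m)))
          (\<lambda>b. if b then return_pmf (Suc m) else parent_choice \<theta> m)) j"
  proof -
    have e: "pmf (bind_pmf (bernoulli_pmf (1 / (\<theta> + real m)))
          (\<lambda>b. if b then return_pmf (Suc m) else parent_choice \<theta> m)) j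
        = (if j = Suc m then 1 else 0) * (1 / (\<theta> + real m)) + pcw \<theta> m j * (1 - 1 / (\<theta> + real m))"
      using assms p1 by (simp add: pmf_bind pmf_pc indicator_def)
    have r: "(\<theta> + real m - 1) / (\<theta> + real m) = 1 - 1 / (\<theta> + real m)"
      using pos by (simp add: field_simps)
    have key: "\<And>x. x / (\<theta> + real m) = x / (\<theta> + real m - 1) * (1 - 1 / (\<theta> + real m))"
    proof -
      fix x
      have "1 - 1 / (\<theta> + real m) = (\<theta> + real m - 1) / (\<theta> + real m)" using pos by (simp add: field_simps)
      thus "x / (\<theta> + real m) = x / (\<theta> + real m - 1) * (1 - 1 / (\<theta> + real m))" using pos by simp
    qed
    have k1: "1 / (\<theta> + real m) = (1 - 1 / (\<theta> + real m)) / (\<theta> + real m - 1)"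
      using key[of 1] by simp
    have k2: "\<theta> / (\<theta> + real m) = \<theta> * (1 - 1 / (\<theta> + real m)) / (\<theta> + real m - 1)"
      using key[of \<theta>] by simp
    show ?thesis unfolding e using assms pos k1 k2
      by (auto simp: pmf_pc pcw_def)
  qed
qed

definition valid :: "nat list \<Rightarrow> bool" where
  "valid par \<longleftrightarrow> (\<forall>i<length par. 1 \<le> par ! i \<and> par ! i \<le> Suc i)"

lemma valid_snoc: "valid par \<Longrightarrow> 1 \<le> j \<Longrightarrow> j \<le> Suc (length par) \<Longrightarrow> valid (par @ [j])"
  by (auto simp: valid_def nth_append less_Suc_eq)

lemma depth_prefix:
  "valid par \<Longrightarrow> k \<le> Suc (length par) \<Longrightarrow> depth_aux (par @ xs) f k = depth_aux par f k"
proof (induction f arbitrary: k)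
  case 0 then show ?case by simp
next
  case (Suc f)
  show ?case
  proof (cases "k \<le> 1")
    case False
    then have i: "k - 2 < length par" using Suc.prems by auto
    then have "(par @ xs) ! (k - 2) = par ! (k - 2)" by (simp add: nth_append)
    moreover have "par ! (k - 2) \<le> Suc (length par)" using Suc.prems(1) i by (auto simp: valid_def)
    ultimately show ?thesis using False Suc.IH[OF Suc.prems(1)] by simp
  qed simp
qed

lemma depth_fuel:
  "valid par \<Longrightarrow> k \<le> Suc (length par) \<Longrightarrow> k \<le> Suc f \<Longrightarrow> k \<le> Suc g \<Longrightarrow>
   depth_aux par f k = depth_aux par g k"
proof (induction f arbitrary: g k)
  case 0 then show ?case by (cases g) auto
next
  case (Suc f)
  show ?case
  proof (cases g)
    case 0 then show ?thesis using Suc.prems by auto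
  next
    case (Suc g')
    show ?thesis
    proof (cases "k \<le> 1")
      case False
      then have i: "k - 2 < length par" using Suc.prems by auto
      have "par ! (k - 2) \<le> k - 1" using Suc.prems(1) i False by (auto simp: valid_def)
      then have "depth_aux par f (par ! (k - 2)) = depth_aux par g' (par ! (k - 2))"
        using Suc.prems False Suc by (intro Suc.IH) auto
      then show ?thesis using False Suc by simp
    qed (simp add: Suc)
  qed
qed

lemma depth_step:
  assumes "valid par" "1 \<le> j" "j \<le> Suc (length par)"
  shows "depth (par @ [j]) (Suc (Suc (length par))) = Suc (depth par j)"
proof -
  have "depth (par @ [j]) (Suc (Suc (length par))) = Suc (depth_aux (par @ [j]) (Suc (length par)) j)"
    by (simp add: depth_def)
  also have "depth_aux (par @ [j]) (Suc (length par)) j = depth_aux par (Suc (length par)) j"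
    using assms by (intro depth_prefix) auto
  also have "\<dots> = depth_aux par j j"
    using assms by (intro depth_fuel) auto
  finally show ?thesis by (simp add: depth_def)
qed

lemma depth_prefix': "valid par \<Longrightarrow> k \<le> Suc (length par) \<Longrightarrow> depth (par @ xs) k = depth par k"
  by (simp add: depth_def depth_prefix)

lemma hoppe_support:
  assumes "\<theta> > 0"
  shows "par \<in> set_pmf (hoppe_tree \<theta> (Suc m)) \<Longrightarrow> valid par \<and> length par = m"
proof (induction m arbitrary: par)
  case 0 then show ?case by (simp add: valid_def)
next
  case (Suc m)
  from Suc.prems obtain q j where q: "q \<in> set_pmf (hoppe_tree \<theta> (Suc m))"
    and j: "j \<in> set_pmf (parent_choice \<theta> (Suc m))" and p: "par = q @ [j]" by auto
  from Suc.IH[OF q] have "valid q" "length q = m" by auto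
  moreover from set_pc[OF assms _ j] have "1 \<le> j" "j \<le> Suc m" by auto
  ultimately show ?case using p by (auto intro: valid_snoc)
qed

lemma law_step:
  assumes "\<theta> > 0"
  shows "map_pmf (\<lambda>par. depth par (Suc (Suc m))) (hoppe_tree \<theta> (Suc (Suc m))) =
    bind_pmf (hoppe_tree \<theta> (Suc m)) (\<lambda>q. map_pmf (\<lambda>j. Suc (depth q j)) (parent_choice \<theta> (Suc m)))"
proof -
  have "map_pmf (\<lambda>par. depth par (Suc (Suc m))) (hoppe_tree \<theta> (Suc (Suc m))) =
    bind_pmf (hoppe_tree \<theta> (Suc m)) (\<lambda>q. map_pmf (\<lambda>j. depth (q @ [j]) (Suc (Suc m))) (parent_choice \<theta> (Suc m)))"
    by (simp add: map_bind_pmf pmf.map_comp o_def)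
  also have "\<dots> = bind_pmf (hoppe_tree \<theta> (Suc m)) (\<lambda>q. map_pmf (\<lambda>j. Suc (depth q j)) (parent_choice \<theta> (Suc m)))"
  proof (intro bind_pmf_cong refl map_pmf_cong)
    fix q j assume q: "q \<in> set_pmf (hoppe_tree \<theta> (Suc m))" and j: "j \<in> set_pmf (parent_choice \<theta> (Suc m))"
    from hoppe_support[OF assms q] have "valid q" "length q = m" by auto
    moreover from set_pc[OF assms _ j] have "1 \<le> j" "j \<le> Suc m" by auto
    ultimately show "depth (q @ [j]) (Suc (Suc m)) = Suc (depth q j)"
      using depth_step[of q j] by auto
  qed
  finally show ?thesis .
qed

lemma law_rec:
  assumes "\<theta> > 0"
  shows "map_pmf (\<lambda>par. depth par (Suc (Suc (Suc k)))) (hoppe_tree \<theta> (Suc (Suc (Suc k)))) =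
    bind_pmf (bernoulli_pmf (1 / (\<theta> + real (Suc k))))
      (\<lambda>b. map_pmf (\<lambda>d. d + of_bool b) (map_pmf (\<lambda>par. depth par (Suc (Suc k))) (hoppe_tree \<theta> (Suc (Suc k)))))"
  (is "?L = ?R")
proof -
  define T where "T = hoppe_tree \<theta> (Suc k)"
  define P where "P = parent_choice \<theta> (Suc k)"
  define B where "B = bernoulli_pmf (1 / (\<theta> + real (Suc k)))"
  have T2: "hoppe_tree \<theta> (Suc (Suc k)) = bind_pmf T (\<lambda>q. map_pmf (\<lambda>j. q @ [j]) P)"
    by (simp add: T_def P_def)
  have mix: "parent_choice \<theta> (Suc (Suc k)) = bind_pmf B (\<lambda>b. if b then return_pmf (Suc (Suc k)) else P)"
    unfolding B_def P_def using assms by (intro pc_mix) auto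
  have "?L = bind_pmf (hoppe_tree \<theta> (Suc (Suc k)))
      (\<lambda>par. map_pmf (\<lambda>j. Suc (depth par j)) (parent_choice \<theta> (Suc (Suc k))))"
    using law_step[OF assms, of "Suc k"] .
  also have "\<dots> = bind_pmf T (\<lambda>q. bind_pmf P (\<lambda>j'.
      map_pmf (\<lambda>j. Suc (depth (q @ [j']) j)) (parent_choice \<theta> (Suc (Suc k)))))"
    by (simp add: T_def P_def bind_map_pmf bind_assoc_pmf)
  also have "\<dots> = bind_pmf T (\<lambda>q. bind_pmf P (\<lambda>j'. bind_pmf B (\<lambda>b.
      if b then return_pmf (Suc (Suc (depth q j'))) else map_pmf (\<lambda>j. Suc (depth q j)) P)))"
  proof (intro bind_pmf_cong refl)
    fix q j' assume q: "q \<in> set_pmf T" and j': "j' \<in> set_pmf P"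
    from hoppe_support[OF assms q[unfolded T_def]] have v: "valid q" "length q = k" by auto
    from set_pc[OF assms _ j'[unfolded P_def]] have j'b: "1 \<le> j'" "j' \<le> Suc k" by auto
    have "map_pmf (\<lambda>j. Suc (depth (q @ [j']) j)) (parent_choice \<theta> (Suc (Suc k))) =
       bind_pmf B (\<lambda>b. map_pmf (\<lambda>j. Suc (depth (q @ [j']) j)) (if b then return_pmf (Suc (Suc k)) else P))"
      by (simp add: mix map_bind_pmf)
    also have "\<dots> = bind_pmf B (\<lambda>b.
      if b then return_pmf (Suc (Suc (depth q j'))) else map_pmf (\<lambda>j. Suc (depth q j)) P)"
    proof (intro bind_pmf_cong refl)
      fix b
      show "map_pmf (\<lambda>j. Suc (depth (q @ [j']) j)) (if b then return_pmf (Suc (Suc k)) else P) =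
        (if b then return_pmf (Suc (Suc (depth q j'))) else map_pmf (\<lambda>j. Suc (depth q j)) P)"
      proof (cases b)
        case True
        then show ?thesis using depth_step[OF v(1) j'b(1)] v j'b by simp
      next
        case False
        have "map_pmf (\<lambda>j. Suc (depth (q @ [j']) j)) P = map_pmf (\<lambda>j. Suc (depth q j)) P"
        proof (rule map_pmf_cong[OF refl])
          fix j assume "j \<in> set_pmf P"
          from set_pc[OF assms _ this[unfolded P_def]] have "j \<le> Suc k" by auto
          then show "Suc (depth (q @ [j']) j) = Suc (depth q j)"
            using depth_prefix'[OF v(1)] v by simp
        qed
        then show ?thesis using False by simp
      qed
    qed
    finally show "map_pmf (\<lambda>j. Suc (depth (q @ [j']) j)) (parent_choice \<theta> (Suc (Suc k))) = bind_pmf B (\<lambda>b.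
      if b then return_pmf (Suc (Suc (depth q j'))) else map_pmf (\<lambda>j. Suc (depth q j)) P)" .
  qed
  also have "\<dots> = bind_pmf T (\<lambda>q. bind_pmf B (\<lambda>b. bind_pmf P (\<lambda>j'.
      if b then return_pmf (Suc (Suc (depth q j'))) else map_pmf (\<lambda>j. Suc (depth q j)) P)))"
    by (subst bind_commute_pmf) (rule refl)
  also have "\<dots> = bind_pmf T (\<lambda>q. bind_pmf B (\<lambda>b. map_pmf (\<lambda>j. Suc (depth q j) + of_bool b) P))"
  proof (intro bind_pmf_cong refl)
    fix q b
    show "bind_pmf P (\<lambda>j'. if b then return_pmf (Suc (Suc (depth q j'))) else map_pmf (\<lambda>j. Suc (depth q j)) P)
      = map_pmf (\<lambda>j. Suc (depth q j) + of_bool b) P"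
      by (cases b) (simp_all add: map_pmf_def)
  qed
  also have "\<dots> = bind_pmf B (\<lambda>b. bind_pmf T (\<lambda>q. map_pmf (\<lambda>j. Suc (depth q j) + of_bool b) P))"
    by (rule bind_commute_pmf)
  also have "\<dots> = ?R"
    unfolding law_step[OF assms, of k] B_def[symmetric]
    by (simp add: map_bind_pmf pmf.map_comp o_def T_def P_def)
  finally show ?thesis .
qed

lemma rhs_rec:
  "map_pmf (\<lambda>B. 1 + card {i \<in> {1..Suc k}. B i})
      (Pi_pmf {1..Suc k} False (\<lambda>i. bernoulli_pmf (1 / (\<theta> + real i)))) =
   bind_pmf (bernoulli_pmf (1 / (\<theta> + real (Suc k))))
      (\<lambda>b. map_pmf (\<lambda>d. d + of_bool b) (map_pmf (\<lambda>B. 1 + card {i \<in> {1..k}. B i})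
        (Pi_pmf {1..k} False (\<lambda>i. bernoulli_pmf (1 / (\<theta> + real i))))))"
proof -
  have e: "{1..Suc k} = insert (Suc k) {1..k}" by auto
  have c: "card {i \<in> insert (Suc k) {1..k}. (f(Suc k := y)) i} = card {i \<in> {1..k}. f i} + of_bool y"
    for f :: "nat \<Rightarrow> bool" and y
  proof -
    have "{i \<in> insert (Suc k) {1..k}. (f(Suc k := y)) i} =
      (if y then insert (Suc k) {i \<in> {1..k}. f i} else {i \<in> {1..k}. f i})" by auto
    then show ?thesis by simp
  qed
  have pi: "Pi_pmf (insert (Suc k) {1..k}) False (\<lambda>i. bernoulli_pmf (1 / (\<theta> + real i))) =
     do {y \<leftarrow> bernoulli_pmf (1 / (\<theta> + real (Suc k)));
         f \<leftarrow> Pi_pmf {1..k} False (\<lambda>i. bernoulli_pmf (1 / (\<theta> + real i)));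
         return_pmf (f(Suc k := y))}"
    by (rule Pi_pmf_insert') auto
  show ?thesis unfolding e pi
    by (simp only: map_pmf_def bind_assoc_pmf bind_return_pmf c add.assoc)
qed

theorem theorem2p1:
  fixes \<theta> :: real and n :: nat
  assumes "\<theta> > 0" and "n \<ge> 2"
  shows "map_pmf (\<lambda>par. depth par n) (hoppe_tree \<theta> n) =
         map_pmf (\<lambda>B. 1 + card {i \<in> {1..n-2}. B i})
           (Pi_pmf {1..n-2} False (\<lambda>i. bernoulli_pmf (1 / (\<theta> + real i))))"
proof -
  obtain k where n: "n = Suc (Suc k)" using assms(2) by (metis add_2_eq_Suc le_iff_add)
  have "map_pmf (\<lambda>par. depth par (Suc (Suc k))) (hoppe_tree \<theta> (Suc (Suc k))) =
         map_pmf (\<lambda>B. 1 + card {i \<in> {1..k}. B i})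
           (Pi_pmf {1..k} False (\<lambda>i. bernoulli_pmf (1 / (\<theta> + real i))))"
  proof (induction k)
    case 0
    have "map_pmf (\<lambda>par. depth par (Suc (Suc 0))) (hoppe_tree \<theta> (Suc (Suc 0))) =
      map_pmf (\<lambda>j. Suc (depth [] j)) (parent_choice \<theta> (Suc 0))"
      using law_step[OF assms(1), of 0] by (simp only: hoppe_tree.simps(2) bind_return_pmf)
    also have "\<dots> = map_pmf (\<lambda>j. 1) (parent_choice \<theta> (Suc 0))"
    proof (rule map_pmf_cong[OF refl])
      fix j assume "j \<in> set_pmf (parent_choice \<theta> (Suc 0))"
      from set_pc[OF assms(1) _ this] have "j = 1" by auto
      then show "Suc (depth [] j) = 1" by (simp add: depth_def)
    qed
    finally show ?case by simp
  next
    case (Suc k)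
    show ?case unfolding law_rec[OF assms(1)] rhs_rec Suc ..
  qed
  then show ?thesis using n by simp
qed

end
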